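(* For an ellipse $\mathcal{A}=\{\mathbf{u}\in\mathbb{R}^2:(\mathbf{u}-\mathbf{y})^TY(\mathbf{u}-\mathbf{y})=1\}$ with center $\mathbf{y}\in\mathbb{R}^2$ and symmetric positive definite $2\times2$ matrix $Y$, let $p_{\mathcal{A}}(\mathbf{u})=\exp\!\big[-\tfrac12(\mathbf{u}-\mathbf{y})^TY(\mathbf{u}-\mathbf{y})\big]$ (up to a positive constant factor, the density of the Gaussian $N(\mathbf{y},Y^{-1})$). For two ellipses $\mathcal{A}_i,\mathcal{A}_j$ define $$d_{GA}(\mathcal{A}_i,\mathcal{A}_j)=\arccos\frac{\int_{\mathbb{R}^2}p_{\mathcal{A}_i}p_{\mathcal{A}_j}\,d\mathbf{u}}{\sqrt{\int_{\mathbb{R}^2}p_{\mathcal{A}_i}^2\,d\mathbf{u}\int_{\mathbb{R}^2}p_{\mathcal{A}_j}^2\,d\mathbf{u}}}.$$ Then on the set of ellipses in $\mathbb{R}^2$: (1) $d_{GA}(\mathcal{A}_i,\mathcal{A}_j)=0$ iff $\mathcal{A}_i=\mathcal{A}_j$; (2) $d_{GA}(\mathcal{A}_i,\mathcal{A}_j)=d_{GA}(\mathcal{A}_j,\mathcal{A}_i)$; (3) $d_{GA}(\mathcal{A}_i,\mathcal{A}_j)\le d_{GA}(\mathcal{A}_i,\mathcal{A}_k)+d_{GA}(\mathcal{A}_k,\mathcal{A}_j)$ for all ellipses $\mathcal{A}_k$; (4) $d_{GA}(S[\mathcal{A}_i],S[\mathcal{A}_j])=d_{GA}(\mathcal{A}_i,\mathcal{A}_j)$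 for every similarity transformation $S$ of $\mathbb{R}^2$ (composition of translation, rotation and uniform scaling by a positive factor).
   Context: $S[\mathcal{A}]$ denotes the image of the ellipse $\mathcal{A}$ (as a subset of $\mathbb{R}^2$) under $S$, which is again an ellipse. The value of $d_{GA}$ does not depend on the positive normalizing constants chosen for $p_{\mathcal{A}}$. *)

theory Defs
  imports "HOL-Analysis.Analysis"
begin

definition spd2 :: "real^2^2 \<Rightarrow> bool" where
  "spd2 Y \<longleftrightarrow> transpose Y = Y \<and> (\<forall>x::real^2. x \<noteq> 0 \<longrightarrow> x \<bullet> (Y *v x) > 0)"

definition ellipse_set :: "real^2 \<Rightarrow> real^2^2 \<Rightarrow> (real^2) set" where
  "ellipse_set y Y = {u. (u - y) \<bullet> (Y *v (u - y)) = 1}"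

definition is_ellipse :: "(real^2) set \<Rightarrow> bool" where
  "is_ellipse A \<longleftrightarrow> (\<exists>y Y. spd2 Y \<and> A = ellipse_set y Y)"

definition ell_params :: "(real^2) set \<Rightarrow> (real^2) \<times> (real^2^2)" where
  "ell_params A = (SOME (y, Y). spd2 Y \<and> A = ellipse_set y Y)"

definition ell_density :: "(real^2) set \<Rightarrow> real^2 \<Rightarrow> real" where
  "ell_density A u = (case ell_params A of (y, Y) \<Rightarrow>
      exp (- (1/2) * ((u - y) \<bullet> (Y *v (u - y)))))"

definition d_GA :: "(real^2) set \<Rightarrow> (real^2) set \<Rightarrow> real" where
  "d_GA A B = arccos
     (integral UNIV (\<lambda>u. ell_density A u * ell_density B u) /
      sqrt (integral UNIV (\<lambda>u. (ell_density A u)\<^sup>2) * integral UNIV (\<lambda>u. (ell_density B u)\<^sup>2)))"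

definition similarity2 :: "(real^2 \<Rightarrow> real^2) \<Rightarrow> bool" where
  "similarity2 S \<longleftrightarrow> (\<exists>c (R::real^2^2) b. c > 0 \<and> orthogonal_matrix R \<and> det R = 1 \<and>
      S = (\<lambda>x. c *\<^sub>R (R *v x) + b))"

end

theory Submission
  imports Defs "HOL-Probability.Probability"
begin


lemma psd2_aux:
  fixes P Q M :: real
  assumes h: "\<And>r s. 0 \<le> r * r * P + s * s * Q + 2 * r * s * M"
  shows "M * M \<le> P * Q"
proof (cases "P = 0")
  case True
  show ?thesis
  proof (cases "M = 0")
    case False
    have "0 \<le> (-(Q+1)/(2 * M)) * (-(Q+1)/(2 * M)) * P + 1 * 1 * Q + 2 * (-(Q+1)/(2 * M)) * 1 * M" by (rule h)
    also have "\<dots> = -1" using True False by (simp add: field_simps)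
    finally show ?thesis by simp
  qed (use True in simp)
next
  case False
  have P0: "0 \<le> P" using h[of 1 0] by simp
  with False have "P > 0" by simp
  have "0 \<le> (-M) * (-M) * P + P * P * Q + 2 * (-M) * P * M" by (rule h)
  also have "\<dots> = P * (P * Q - M * M)" by (simp add: algebra_simps)
  finally have "0 \<le> P * (P * Q - M * M)" .
  with \<open>P>0\<close> show ?thesis by (simp add: zero_le_mult_iff)
qed

lemma tri_aux:
  fixes x y z :: real
  assumes h: "\<And>r s t. 0 \<le> r * r + s * s + t * t + 2 * r * s * z + 2 * r * t * x + 2 * s * t * y"
  shows "arccos z \<le> arccos x + arccos y" and "\<bar>z\<bar> \<le> 1"
proof -
  have z1: "z * z \<le> 1 * 1" using psd2_aux[of 1 1 z] h[of _ _ 0] by simp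
  have x1: "x * x \<le> 1 * 1" using psd2_aux[of 1 1 x] h[of _ 0] by simp
  have y1: "y * y \<le> 1 * 1" using psd2_aux[of 1 1 y] h[of 0] by simp
  show zz: "\<bar>z\<bar> \<le> 1" using z1 by (metis abs_le_square_iff abs_one power2_eq_square)
  have xx: "\<bar>x\<bar> \<le> 1" using x1 by (metis abs_le_square_iff abs_one power2_eq_square)
  have yy: "\<bar>y\<bar> \<le> 1" using y1 by (metis abs_le_square_iff abs_one power2_eq_square)
  have q: "0 \<le> r * r * (1-x * x) + s * s * (1-y * y) + 2 * r * s * (z-x * y)" for r s
  proof -
    have "0 \<le> r * r + s * s + (-(r * x+s * y)) * (-(r * x+s * y)) + 2 * r * s * z + 2 * r * (-(r * x+s * y)) * x + 2 * s * (-(r * x+s * y)) * y"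
      by (rule h)
    also have "\<dots> = r * r * (1-x * x) + s * s * (1-y * y) + 2 * r * s * (z-x * y)" by (simp add: algebra_simps)
    finally show ?thesis .
  qed
  have cs: "(z-x * y) * (z-x * y) \<le> (1-x * x) * (1-y * y)" by (rule psd2_aux) (rule q)
  have nx: "0 \<le> 1-x * x" and ny: "0 \<le> 1-y * y" using x1 y1 by auto
  have "\<bar>z-x * y\<bar> \<le> sqrt ((1-x * x) * (1-y * y))"
    using cs by (metis real_sqrt_abs real_sqrt_le_mono power2_eq_square)
  hence low: "x * y - sqrt (1-x * x)  *  sqrt (1-y * y) \<le> z" by (simp add: real_sqrt_mult)
  show "arccos z \<le> arccos x + arccos y"
  proof (cases "arccos x + arccos y \<le> pi")
    case False
    then show ?thesis using arccos_ubound[of z] zz by (simp add: abs_le_iff)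
  next
    case True
    have s: "0 \<le> arccos x + arccos y" using arccos_lbound[of x] arccos_lbound[of y] xx yy by (simp add: abs_le_iff)
    have "cos (arccos x + arccos y) = x * y - sqrt (1-x * x)  *  sqrt (1-y * y)"
      using xx yy by (simp add: cos_add sin_arccos power2_eq_square abs_le_iff)
    hence c: "cos (arccos x + arccos y) \<le> z" using low by simp
    have "arccos z \<le> arccos (cos (arccos x + arccos y))"
      by (rule arccos_le_arccos) (use c zz in \<open>auto simp: abs_le_iff\<close>)
    also have "\<dots> = arccos x + arccos y" using s True by (simp add: arccos_cos)
    finally show ?thesis .
  qed
qed



lemma mv_scaleR: "(A::real^'n^'m) *v (a *\<^sub>R v) = a *\<^sub>R (A *v v)"
  by (simp add: matrix_vector_mult_def vec_eq_iff sum_distrib_left algebra_simps)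

lemma quad_scale: "((a::real) *\<^sub>R (v::real^'n)) \<bullet> (Y *v (a *\<^sub>R v)) = a^2 * (v \<bullet> (Y *v v))"
  unfolding mv_scaleR inner_scaleR_left inner_scaleR_right by (simp add: power2_eq_square)

lemma quad_shift: "(y + (a::real) *\<^sub>R (v::real^'n) - y) \<bullet> (Y *v (y + a *\<^sub>R v - y)) = a^2 * (v \<bullet> (Y *v v))"
  using quad_scale[of a v Y] by simp

lemma sym_inner: assumes "transpose M = M" shows "v \<bullet> (M *v w) = w \<bullet> (M *v (v::real^'n))"
proof -
  have "v \<bullet> (M *v w) = (v v* M) \<bullet> w" by (simp add: dot_lmul_matrix)
  also have "v v* M = transpose M *v v" by (simp add: transpose_matrix_vector)
  finally show ?thesis using assms by (simp add: inner_commute)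
qed

lemma quad_eq_imp_eq:
  assumes "transpose Y = Y" "transpose Z = Z" "\<And>v. v \<bullet> (Y *v v) = v \<bullet> (Z *v (v::real^'n))"
  shows "Y = Z"
proof -
  have bil: "v \<bullet> (Y *v w) = v \<bullet> (Z *v w)" for v w
  proof -
    have "(v+w) \<bullet> (Y *v (v+w)) = v \<bullet> (Y *v v) + w \<bullet> (Y *v w) + 2 * (v \<bullet> (Y *v w))"
      using sym_inner[OF assms(1), of w v]
      by (simp add: matrix_vector_right_distrib inner_add_left inner_add_right)
    moreover have "(v+w) \<bullet> (Z *v (v+w)) = v \<bullet> (Z *v v) + w \<bullet> (Z *v w) + 2 * (v \<bullet> (Z *v w))"
      using sym_inner[OF assms(2), of w v]
      by (simp add: matrix_vector_right_distrib inner_add_left inner_add_right)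
    ultimately show ?thesis using assms(3)[of "v+w"] assms(3)[of v] assms(3)[of w] by simp
  qed
  show ?thesis
  proof (rule vec_eq_iff[THEN iffD2], intro allI, rule vec_eq_iff[THEN iffD2], intro allI)
    fix i j
    have "axis i 1 \<bullet> (Y *v axis j 1) = axis i 1 \<bullet> (Z *v axis j 1)" by (rule bil)
    thus "Y $ i $ j = Z $ i $ j"
      by (simp add: matrix_vector_mult_basis inner_axis' column_def)
  qed
qed

lemma spd_pos: "spd2 Y \<Longrightarrow> v \<noteq> 0 \<Longrightarrow> 0 < v \<bullet> (Y *v v)"
  by (simp add: spd2_def)

lemma ellipse_unique:
  assumes Y: "spd2 Y" and Z: "spd2 Z" and E: "ellipse_set y Y = ellipse_set z Z"
  shows "y = z \<and> Y = Z"
proof -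
  have mem: "u \<in> ellipse_set z Z \<longleftrightarrow> (u - y) \<bullet> (Y *v (u - y)) = 1" for u
  proof -
    have "u \<in> ellipse_set z Z \<longleftrightarrow> u \<in> ellipse_set y Y" using E by simp
    thus ?thesis by (simp add: ellipse_set_def)
  qed
  have yz: "y = z"
  proof (rule ccontr)
    assume "y \<noteq> z"
    define d where "d = y - z"
    have d0: "d \<noteq> 0" using \<open>y \<noteq> z\<close> by (simp add: d_def)
    have pY: "0 < d \<bullet> (Y *v d)" and pZ: "0 < d \<bullet> (Z *v d)" using d0 Y Z by (auto simp: spd_pos)
    define s where "s = 1 / sqrt (d \<bullet> (Y *v d))"
    have s0: "s > 0" using pY by (simp add: s_def)
    have s2: "s^2 * (d \<bullet> (Y *v d)) = 1" using pY by (simp add: s_def power_divide)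
    have "y + s *\<^sub>R d \<in> ellipse_set z Z"
      unfolding mem quad_shift using s2 .
    hence 1: "(1+s)^2 * (d \<bullet> (Z *v d)) = 1"
    proof -
      assume "y + s *\<^sub>R d \<in> ellipse_set z Z"
      hence "((1+s) *\<^sub>R d) \<bullet> (Z *v ((1+s) *\<^sub>R d)) = 1"
        by (simp add: ellipse_set_def d_def algebra_simps)
      thus ?thesis by (simp only: quad_scale)
    qed
    have "y + (-s) *\<^sub>R d \<in> ellipse_set z Z"
      unfolding mem quad_shift using s2 by simp
    hence 2: "(1-s)^2 * (d \<bullet> (Z *v d)) = 1"
    proof -
      assume "y + (-s) *\<^sub>R d \<in> ellipse_set z Z"
      hence "((1-s) *\<^sub>R d) \<bullet> (Z *v ((1-s) *\<^sub>R d)) = 1"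
        by (simp add: ellipse_set_def d_def algebra_simps)
      thus ?thesis by (simp only: quad_scale)
    qed
    from 1 2 have "(1+s)^2 * (d \<bullet> (Z *v d)) = (1-s)^2 * (d \<bullet> (Z *v d))" by simp
    hence "(1+s)^2 = (1-s)^2" using pZ by simp
    hence "4 * s = 0" by (simp add: power2_eq_square algebra_simps)
    with s0 show False by simp
  qed
  have "v \<bullet> (Y *v v) = v \<bullet> (Z *v v)" for v
  proof (cases "v = 0")
    case False
    have pY: "0 < v \<bullet> (Y *v v)" using False Y by (auto simp: spd_pos)
    define t where "t = 1 / sqrt (v \<bullet> (Y *v v))"
    have t2: "t^2 * (v \<bullet> (Y *v v)) = 1" using pY by (simp add: t_def power_divide)
    have "y + t *\<^sub>R v \<in> ellipse_set z Z" unfolding mem quad_shift using t2 .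
    hence "y + t *\<^sub>R v \<in> ellipse_set y Z" using yz by simp
    hence "t^2 * (v \<bullet> (Z *v v)) = 1" unfolding ellipse_set_def mem_Collect_eq quad_shift .
    with t2 have "t^2 * (v \<bullet> (Z *v v)) = t^2 * (v \<bullet> (Y *v v))" by simp
    moreover have "t^2 \<noteq> 0" using t2 by auto
    ultimately show ?thesis by simp
  qed simp
  moreover have "transpose Y = Y" "transpose Z = Z" using Y Z by (simp_all add: spd2_def)
  ultimately have "Y = Z" using quad_eq_imp_eq by metis
  with yz show ?thesis by simp
qed



definition qd :: "real^2 \<Rightarrow> real^2^2 \<Rightarrow> real^2 \<Rightarrow> real" where
  "qd y Y u = exp (- (1/2) * ((u - y) \<bullet> (Y *v (u - y))))"

lemma ell_params_ellipse: "spd2 Y \<Longrightarrow> ell_params (ellipse_set y Y) = (y, Y)"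
proof -
  assume Y: "spd2 Y"
  have ex: "\<exists>p. (case p of (z, Z) \<Rightarrow> spd2 Z \<and> ellipse_set y Y = ellipse_set z Z)"
    using Y by auto
  obtain z Z where p: "ell_params (ellipse_set y Y) = (z, Z)" by fastforce
  have "spd2 Z \<and> ellipse_set y Y = ellipse_set z Z"
    using someI_ex[OF ex] p unfolding ell_params_def by simp
  thus ?thesis using ellipse_unique[OF Y] p by metis
qed

lemma ell_density_ellipse: "spd2 Y \<Longrightarrow> ell_density (ellipse_set y Y) = qd y Y"
  by (simp add: fun_eq_iff ell_density_def ell_params_ellipse qd_def)

lemma is_ellipseE:
  assumes "is_ellipse A"
  obtains y Y where "spd2 Y" "A = ellipse_set y Y" "ell_density A = qd y Y"
  using assms ell_density_ellipse unfolding is_ellipse_def by blast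

lemma qd_pos: "0 < qd y Y u" by (simp add: qd_def)
lemma qd_le1: "spd2 Y \<Longrightarrow> qd y Y u \<le> 1"
proof -
  assume Y: "spd2 Y"
  have "0 \<le> (u - y) \<bullet> (Y *v (u - y))"
    using Y by (cases "u - y = 0") (auto simp: spd2_def less_imp_le)
  thus ?thesis by (simp add: qd_def)
qed

lemma cont_mv: "continuous_on UNIV (\<lambda>u. (A::real^'n^'m) *v u)"
  by (simp add: linear_continuous_on matrix_vector_mul_linear)

lemma qd_cont: "continuous_on UNIV (qd y Y)"
  unfolding qd_def
  by (intro continuous_intros continuous_on_compose2[OF cont_mv]) auto

lemma spd_lower:
  assumes Y: "spd2 Y"
  shows "\<exists>m>0. \<forall>v. m * (v \<bullet> v) \<le> v \<bullet> (Y *v v)"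
proof -
  let ?S = "sphere (0::real^2) 1"
  have c: "continuous_on ?S (\<lambda>v. v \<bullet> (Y *v v))"
    by (intro continuous_intros continuous_on_compose2[OF cont_mv]) auto
  have ne: "?S \<noteq> {}" using norm_axis_1[of "1::2"]
    by (metis mem_sphere_0 empty_iff)
  obtain w where w: "w \<in> ?S" "\<And>v. v \<in> ?S \<Longrightarrow> w \<bullet> (Y *v w) \<le> v \<bullet> (Y *v v)"
    using continuous_attains_inf[OF compact_sphere ne c] by blast
  have w0: "w \<noteq> 0" using w(1) by auto
  define m where "m = w \<bullet> (Y *v w)"
  have m0: "m > 0" using Y w0 by (simp add: m_def spd2_def)
  have "m * (v \<bullet> v) \<le> v \<bullet> (Y *v v)" for v
  proof (cases "v = 0")
    case False
    define u where "u = (1 / norm v) *\<^sub>R v"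
    have u: "u \<in> ?S" using False by (simp add: u_def)
    have "m \<le> u \<bullet> (Y *v u)" using w(2)[OF u] by (simp add: m_def)
    also have "\<dots> = (1/norm v)^2 * (v \<bullet> (Y *v v))" by (simp only: u_def quad_scale)
    finally have "m * (norm v)^2 \<le> v \<bullet> (Y *v v)"
      using False by (simp add: field_simps power2_eq_square)
    thus ?thesis by (simp add: power2_norm_eq_inner)
  qed simp
  with m0 show ?thesis by blast
qed



lemma gauss_integrable:
  assumes m: "m > 0"
  shows "integrable lborel (\<lambda>x::real^2. exp (-(m/2) * ((x-y) \<bullet> (x-y))))"
proof -
  define \<sigma> where "\<sigma> = 1 / sqrt m"
  define c0 where "c0 = 1 / sqrt (2 * pi * \<sigma>\<^sup>2)"
  have s2: "\<sigma>\<^sup>2 = 1/m" using m by (simp add: \<sigma>_def power_divide)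
  have "\<sigma> > 0" using m by (simp add: \<sigma>_def)
  have c0: "c0 > 0" using m by (simp add: c0_def s2)
  define G where "G x = (\<Prod>b\<in>(Basis::(real^2) set). normal_density (y \<bullet> b) \<sigma> (x \<bullet> b))" for x
  have nd: "normal_density \<mu> \<sigma> t = c0 * exp (-(m/2) * (t - \<mu>)^2)" for \<mu> t
    using m by (simp add: normal_density_def c0_def s2 field_simps)
  have G: "G x = c0 ^ card (Basis::(real^2) set) * exp (-(m/2) * ((x-y) \<bullet> (x-y)))" for x
  proof -
    have "G x = (\<Prod>b\<in>(Basis::(real^2) set). c0 * exp (-(m/2) * (x \<bullet> b - y \<bullet> b)^2))"
      by (simp add: G_def nd)
    also have "\<dots> = c0 ^ card (Basis::(real^2) set) * exp (\<Sum>b\<in>(Basis::(real^2) set). -(m/2) * (x \<bullet> b - y \<bullet> b)^2)"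
      by (simp add: prod.distrib exp_sum)
    also have "(\<Sum>b\<in>(Basis::(real^2) set). -(m/2) * (x \<bullet> b - y \<bullet> b)^2) = -(m/2) * ((x-y) \<bullet> (x-y))"
    proof -
      have e: "(x-y) \<bullet> (x-y) = (\<Sum>b\<in>(Basis::(real^2) set). (x \<bullet> b - y \<bullet> b)^2)"
        by (simp only: euclidean_inner[of "x-y" "x-y"]) (simp add: inner_diff_left power2_eq_square)
      show ?thesis by (simp only: e sum_distrib_left)
    qed
    finally show ?thesis .
  qed
  have Gm[measurable]: "G \<in> borel_measurable lborel"
    unfolding G_def by measurable
  have "integrable lborel G"
  proof (rule integrableI_nonneg)
    show "G \<in> borel_measurable lborel" by (rule Gm)
    show "AE x in lborel. 0 \<le> G x" by (simp add: G_def prod_nonneg)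
    have "(\<integral>\<^sup>+x. ennreal (G x) \<partial>lborel) = (\<integral>\<^sup>+x. (\<Prod>b\<in>(Basis::(real^2) set). ennreal (normal_density (y \<bullet> b) \<sigma> (x \<bullet> b))) \<partial>lborel)"
      by (simp add: G_def prod_ennreal)
    also have "\<dots> = (\<Prod>b\<in>(Basis::(real^2) set). (\<integral>\<^sup>+t. ennreal (normal_density (y \<bullet> b) \<sigma> t) \<partial>lborel))"
      by (rule nn_integral_lborel_prod) auto
    also have "\<dots> = 1"
    proof -
      have "(\<integral>\<^sup>+t. ennreal (normal_density \<mu> \<sigma> t) \<partial>lborel) = 1" for \<mu>
        using nn_integral_eq_integral[OF integrable_normal_density[where \<mu>=\<mu> and \<sigma>=\<sigma>]] \<open>\<sigma> > 0\<close> by simp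
      thus ?thesis by simp
    qed
    finally show "(\<integral>\<^sup>+x. ennreal (G x) \<partial>lborel) < \<infinity>" by simp
  qed
  hence "integrable lborel (\<lambda>x. G x / c0 ^ card (Basis::(real^2) set))" by simp
  thus ?thesis using c0 by (simp add: G)
qed

lemma dominated_integrable:
  assumes Y: "spd2 Y" and fc: "continuous_on UNIV f"
    and b: "\<And>x. 0 \<le> f x" "\<And>x. f x \<le> qd y Y x"
  shows "integrable lborel (f :: real^2 \<Rightarrow> real)"
proof -
  obtain m where m: "m > 0" "\<And>v. m * (v \<bullet> v) \<le> v \<bullet> (Y *v v)" using spd_lower[OF Y] by blast
  show ?thesis
  proof (rule Bochner_Integration.integrable_bound[OF gauss_integrable[OF m(1), of y]])
    show "f \<in> borel_measurable lborel" using borel_measurable_continuous_onI[OF fc] by simp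
    show "AE x in lborel. norm (f x) \<le> norm (exp (-(m/2) * ((x-y) \<bullet> (x-y))))"
    proof (rule AE_I2)
      fix x
      have "qd y Y x \<le> exp (-(m/2) * ((x-y) \<bullet> (x-y)))"
        unfolding qd_def using m(2)[of "x-y"] by simp
      thus "norm (f x) \<le> norm (exp (-(m/2) * ((x-y) \<bullet> (x-y))))" using b[of x] by simp
    qed
  qed
qed



lemma qd_prod_int: "spd2 Y \<Longrightarrow> spd2 Z \<Longrightarrow> integrable lborel (\<lambda>u. qd y Y u * qd z Z u)"
  apply (rule dominated_integrable[of Y _ y])
     apply assumption
    apply (intro continuous_on_mult qd_cont)
   apply (simp add: qd_pos less_imp_le)
  using qd_le1[of Z z] qd_pos[of y Y] by (simp add: mult_left_le)

lemma zero_lemma: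
  fixes f :: "real^2 \<Rightarrow> real"
  assumes c: "continuous_on UNIV f" and nn: "\<And>x. 0 \<le> f x" and i: "f integrable_on UNIV"
    and z: "integral UNIV f = 0"
  shows "f x = 0"
proof -
  let ?a = "x - 1" and ?b = "x + 1"
  have ic: "f integrable_on cbox ?a ?b" by (rule integrable_continuous) (rule continuous_on_subset[OF c], simp)
  have "integral (cbox ?a ?b) f \<le> integral UNIV f"
    by (rule integral_subset_le) (use ic i nn in auto)
  moreover have "0 \<le> integral (cbox ?a ?b) f" by (rule integral_nonneg[OF ic nn])
  ultimately have "integral (cbox ?a ?b) f = 0" using z by simp
  hence hi: "(f has_integral 0) (cbox ?a ?b)" using ic by (metis has_integral_integral)
  have xb: "x \<in> box ?a ?b" by (simp add: mem_box_cart)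
  show ?thesis
    by (rule has_integral_0_cbox_imp_0[OF continuous_on_subset[OF c] _ hi _ box_subset_cbox[THEN subsetD, OF xb]])
       (use nn xb in auto)
qed

definition GI where "GI y Y z Z = integral UNIV (\<lambda>u. qd y Y u * qd z Z u)"

lemma GI_L: "spd2 Y \<Longrightarrow> spd2 Z \<Longrightarrow> GI y Y z Z = (\<integral>u. qd y Y u * qd z Z u \<partial>lborel)"
  unfolding GI_def by (rule integral_lborel[OF qd_prod_int])

lemma GI_sym: "GI y Y z Z = GI z Z y Y"
  unfolding GI_def by (simp add: mult.commute)

lemma GI_pos: assumes "spd2 Y" shows "0 < GI y Y y Y"
proof -
  have "0 \<le> GI y Y y Y" unfolding GI_def
    by (rule integral_nonneg[OF integrable_on_lborel[OF qd_prod_int[OF assms assms]]]) (simp add: qd_pos less_imp_le)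
  moreover have "GI y Y y Y \<noteq> 0"
  proof
    assume "GI y Y y Y = 0"
    hence "qd y Y y * qd y Y y = 0"
      by (intro zero_lemma[where f="\<lambda>u. qd y Y u * qd y Y u"])
         (auto simp: GI_def qd_cont continuous_on_mult integrable_on_lborel[OF qd_prod_int[OF assms assms]])
    thus False by (simp add: qd_def)
  qed
  ultimately show ?thesis by simp
qed

lemma GI_psd:
  assumes a: "spd2 Ya" and b: "spd2 Yb" and c: "spd2 Yc"
  shows "0 \<le> r*r*GI ya Ya ya Ya + s* s *GI yb Yb yb Yb + t*t*GI yc Yc yc Yc
           + 2*r* s *GI ya Ya yb Yb + 2*r*t*GI ya Ya yc Yc + 2* s *t*GI yc Yc yb Yb"
proof -
  let ?a = "qd ya Ya" and ?b = "qd yb Yb" and ?c = "qd yc Yc"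
  have i1: "integrable lborel (\<lambda>u. ?a u * ?a u)" by (rule qd_prod_int[OF a a])
  have i2: "integrable lborel (\<lambda>u. ?b u * ?b u)" by (rule qd_prod_int[OF b b])
  have i3: "integrable lborel (\<lambda>u. ?c u * ?c u)" by (rule qd_prod_int[OF c c])
  have i4: "integrable lborel (\<lambda>u. ?a u * ?b u)" by (rule qd_prod_int[OF a b])
  have i5: "integrable lborel (\<lambda>u. ?a u * ?c u)" by (rule qd_prod_int[OF a c])
  have i6: "integrable lborel (\<lambda>u. ?c u * ?b u)" by (rule qd_prod_int[OF c b])
  have "0 \<le> (\<integral>u. (r * ?a u + s * ?b u + t * ?c u)^2 \<partial>lborel)" by simp
  also have "(\<lambda>u. (r * ?a u + s * ?b u + t * ?c u)^2) = (\<lambda>u. r*r*(?a u * ?a u) + s* s *(?b u * ?b u) + t*t*(?c u * ?c u)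
      + 2*r* s *(?a u * ?b u) + 2*r*t*(?a u * ?c u) + 2* s *t*(?c u * ?b u))"
    by (simp add: fun_eq_iff power2_eq_square algebra_simps)
  also have "(\<integral>u. r*r*(?a u * ?a u) + s* s *(?b u * ?b u) + t*t*(?c u * ?c u)
      + 2*r* s *(?a u * ?b u) + 2*r*t*(?a u * ?c u) + 2* s *t*(?c u * ?b u) \<partial>lborel)
    = r*r*GI ya Ya ya Ya + s* s *GI yb Yb yb Yb + t*t*GI yc Yc yc Yc
           + 2*r* s *GI ya Ya yb Yb + 2*r*t*GI ya Ya yc Yc + 2* s *t*GI yc Yc yb Yb"
    using i1 i2 i3 i4 i5 i6 by (simp add: GI_L a b c)
  finally show ?thesis .
qed



lemma second_diff: "(w + v - z) \<bullet> (Z *v (w + v - z)) + (w - v - z) \<bullet> (Z *v (w - v - z))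
    - 2 * ((w - z) \<bullet> (Z *v (w - z))) = 2 * (v \<bullet> (Z *v (v::real^'n)))"
proof -
  have e1: "w + v - z = (w - z) + v" and e2: "w - v - z = (w - z) - v" by (simp_all add: algebra_simps)
  show ?thesis unfolding e1 e2
    by (simp add: matrix_vector_right_distrib matrix_vector_mult_diff_distrib inner_add_left inner_add_right
        inner_diff_left inner_diff_right)
qed

lemma quad_const:
  assumes Y: "spd2 Y" and Z: "spd2 Z"
    and h: "\<And>u. (u-y) \<bullet> (Y *v (u-y)) = (u-z) \<bullet> (Z *v (u-z)) + C"
  shows "y = z \<and> Y = Z"
proof -
  have "v \<bullet> (Y *v v) = v \<bullet> (Z *v v)" for v
    using second_diff[of y v y Y] second_diff[of y v z Z] h[of "y+v"] h[of "y-v"] h[of y] by simp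
  moreover have "transpose Y = Y" "transpose Z = Z" using Y Z by (simp_all add: spd2_def)
  ultimately have YZ: "Y = Z" using quad_eq_imp_eq by metis
  have 1: "0 = (y-z) \<bullet> (Z *v (y-z)) + C" using h[of y] by simp
  have 2: "(z-y) \<bullet> (Y *v (z-y)) = C" using h[of z] by simp
  have "(z-y) \<bullet> (Y *v (z-y)) = (y-z) \<bullet> (Y *v (y-z))"
    using quad_scale[of "-1" "y-z" Y] by simp
  hence "(y-z) \<bullet> (Y *v (y-z)) = 0" using 1 2 YZ by simp
  hence "y - z = 0" using Y by (metis spd_pos less_irrefl)
  with YZ show ?thesis by simp
qed

lemma eq_case:
  assumes Y: "spd2 Y" and Z: "spd2 Z"
    and g: "GI y Y z Z = sqrt (GI y Y y Y * GI z Z z Z)"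
  shows "y = z \<and> Y = Z"
proof -
  define a where "a = GI y Y y Y"
  define b where "b = GI z Z z Z"
  have a0: "a > 0" and b0: "b > 0" using GI_pos[OF Y] GI_pos[OF Z] by (simp_all add: a_def b_def)
  let ?p = "qd y Y" and ?q = "qd z Z"
  define h where "h u = (?p u / sqrt a - ?q u / sqrt b)^2" for u
  have heq: "h = (\<lambda>u. (1/a) * (?p u * ?p u) + (1/b) * (?q u * ?q u) - (2/(sqrt a * sqrt b)) * (?p u * ?q u))"
  proof -
    have gen: "(p/ua - q/ub)^2 = (1/(ua*ua)) * (p*p) + (1/(ub*ub)) * (q*q) - (2/(ua*ub)) * (p*q)"
      if "ua > 0" "ub > 0" for p q ua ub :: real
      using that by (simp add: field_simps power2_eq_square)
    show ?thesis unfolding h_def fun_eq_iff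
      using gen[of "sqrt a" "sqrt b"] a0 b0 by simp
  qed
  have i1: "integrable lborel (\<lambda>u. ?p u * ?p u)" by (rule qd_prod_int[OF Y Y])
  have i2: "integrable lborel (\<lambda>u. ?q u * ?q u)" by (rule qd_prod_int[OF Z Z])
  have i3: "integrable lborel (\<lambda>u. ?p u * ?q u)" by (rule qd_prod_int[OF Y Z])
  have ih: "integrable lborel h" unfolding heq using i1 i2 i3 by simp
  have "(\<integral>u. h u \<partial>lborel) = (1/a) * a + (1/b) * b - (2/(sqrt a * sqrt b)) * GI y Y z Z"
    unfolding heq using i1 i2 i3 by (simp add: GI_L Y Z a_def b_def)
  also have "\<dots> = 0"
  proof -
    have g': "GI y Y z Z = sqrt a * sqrt b" using g by (simp add: a_def b_def real_sqrt_mult)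
    have "a \<noteq> 0" "b \<noteq> 0" using a0 b0 by auto
    thus ?thesis using a0 b0 by (simp add: g')
  qed
  finally have hz: "integral UNIV h = 0" using integral_lborel[OF ih] by simp
  have "h u = 0" for u
    by (rule zero_lemma[OF _ _ integrable_on_lborel[OF ih] hz])
       (use a0 b0 in \<open>auto simp: h_def intro!: continuous_intros qd_cont\<close>)
  hence pq: "?p u = (sqrt a / sqrt b) * ?q u" for u
    using a0 b0 by (simp add: h_def field_simps)
  have "(u-y) \<bullet> (Y *v (u-y)) = (u-z) \<bullet> (Z *v (u-z)) + (- 2 * ln (sqrt a / sqrt b))" for u
  proof -
    have "ln (?p u) = ln (sqrt a / sqrt b) + ln (?q u)" unfolding pq[of u]
      by (rule ln_mult_pos) (use a0 b0 qd_pos[of z Z u] in auto)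
    thus ?thesis by (simp add: qd_def)
  qed
  thus ?thesis by (rule quad_const[OF Y Z])
qed



lemma smv: "(k *\<^sub>R (A::real^'m^'n)) *v v = k *\<^sub>R (A *v v)"
  by (simp add: scaleR_matrix_vector_assoc)

lemma inner_mv: "x \<bullet> ((A::real^'n^'n) *v y) = (transpose A *v x) \<bullet> y"
  by (simp add: dot_lmul_matrix[symmetric])

lemma orth_inner: "orthogonal_matrix R \<Longrightarrow> (R *v a) \<bullet> (R *v (b::real^'n)) = a \<bullet> b"
  by (simp add: inner_mv matrix_vector_mul_assoc orthogonal_matrix_def)

lemma orth_left: assumes "orthogonal_matrix R" shows "transpose R *v (R *v (a::real^'n)) = a"
proof -
  have "transpose R ** R = mat 1" using assms by (simp add: orthogonal_matrix_def)
  thus ?thesis by (simp only: matrix_vector_mul_assoc matrix_vector_mul_lid)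
qed

lemma orth_right: assumes "orthogonal_matrix R" shows "R *v (transpose R *v (a::real^'n)) = a"
proof -
  have "R ** transpose R = mat 1" using assms by (simp add: orthogonal_matrix_def)
  thus ?thesis by (simp only: matrix_vector_mul_assoc matrix_vector_mul_lid)
qed

lemma orth_right2: assumes "orthogonal_matrix R" shows "R *v ((a::real^'n) v* R) = a"
  using orth_right[OF assms, of a] by simp

definition Ytr where "Ytr c R Y = (1/c^2) *\<^sub>R (R ** Y ** transpose R)"

lemma quad_T:
  assumes c: "c > 0" and R: "orthogonal_matrix R"
  shows "(c *\<^sub>R (R *v w)) \<bullet> (Ytr c R Y *v (c *\<^sub>R (R *v w))) = w \<bullet> (Y *v (w::real^2))"
proof -
  have "Ytr c R Y *v (c *\<^sub>R (R *v w)) = (1/c) *\<^sub>R (R *v (Y *v w))"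
  proof -
    have "(R ** Y ** transpose R) *v (R *v w) = R *v (Y *v w)"
      by (simp only: matrix_vector_mul_assoc[symmetric] orth_left[OF R])
    thus ?thesis using c by (simp add: Ytr_def smv mv_scaleR power2_eq_square)
  qed
  hence "(c *\<^sub>R (R *v w)) \<bullet> (Ytr c R Y *v (c *\<^sub>R (R *v w))) = (R *v w) \<bullet> (R *v (Y *v w))"
    using c by simp
  also have "\<dots> = w \<bullet> (Y *v w)" by (rule orth_inner[OF R])
  finally show ?thesis .
qed

lemma spd_Ytr:
  assumes c: "c > 0" and R: "orthogonal_matrix R" and Y: "spd2 Y"
  shows "spd2 (Ytr c R Y)"
  unfolding spd2_def
proof (intro conjI allI impI)
  have "transpose Y = Y" using Y by (simp add: spd2_def)
  thus "transpose (Ytr c R Y) = Ytr c R Y"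
    by (simp add: Ytr_def transpose_scalar matrix_transpose_mul matrix_mul_assoc)
next
  fix v :: "real^2" assume v: "v \<noteq> 0"
  define w where "w = (1/c) *\<^sub>R (transpose R *v v)"
  have vw: "v = c *\<^sub>R (R *v w)" using c by (simp add: w_def mv_scaleR orth_right[OF R] orth_right2[OF R])
  have "w \<noteq> 0" using v vw by auto
  hence "0 < w \<bullet> (Y *v w)" using Y by (simp add: spd_pos)
  thus "0 < v \<bullet> (Ytr c R Y *v v)" unfolding vw quad_T[OF c R] .
qed

lemma image_ellipse:
  fixes b :: "real^2"
  assumes c: "c > 0" and R: "orthogonal_matrix R"
  defines "S \<equiv> (\<lambda>x. c *\<^sub>R (R *v x) + b)"
  shows "S ` ellipse_set y Y = ellipse_set (S y) (Ytr c R Y)"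
proof -
  have d: "S x - S y = c *\<^sub>R (R *v (x - y))" for x
    by (simp add: S_def matrix_vector_mult_diff_distrib algebra_simps)
  have q: "(S x - S y) \<bullet> (Ytr c R Y *v (S x - S y)) = (x - y) \<bullet> (Y *v (x - y))" for x
    unfolding d by (rule quad_T[OF c R])
  show ?thesis
  proof (intro equalityI subsetI)
    fix u assume "u \<in> S ` ellipse_set y Y"
    then obtain x where "x \<in> ellipse_set y Y" "u = S x" by blast
    thus "u \<in> ellipse_set (S y) (Ytr c R Y)" using q[of x] by (simp add: ellipse_set_def)
  next
    fix u assume u: "u \<in> ellipse_set (S y) (Ytr c R Y)"
    define x where "x = y + (1/c) *\<^sub>R (transpose R *v (u - S y))"
    have "S x = u" using c
      by (simp add: x_def S_def matrix_vector_right_distrib mv_scaleR orth_right[OF R] orth_right2[OF R] algebra_simps)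
    moreover have "x \<in> ellipse_set y Y" using u q[of x] \<open>S x = u\<close> by (simp add: ellipse_set_def)
    ultimately show "u \<in> S ` ellipse_set y Y" by blast
  qed
qed



lemma lin_L: "linear (\<lambda>v::real^2. c *\<^sub>R (R *v v))"
  unfolding scaleR_matrix_vector_assoc by (rule matrix_vector_mul_linear)

lemma inj_S:
  assumes c: "c > 0" and R: "orthogonal_matrix R"
  shows "inj (\<lambda>v::real^2. c *\<^sub>R (R *v v) + b)"
proof (rule injI)
  fix x y :: "real^2" assume "c *\<^sub>R (R *v x) + b = c *\<^sub>R (R *v y) + b"
  hence "R *v x = R *v y" using c by simp
  hence "transpose R *v (R *v x) = transpose R *v (R *v y)" by simp
  thus "x = y" by (simp only: orth_left[OF R])
qed

lemma K_pos:
  assumes c: "c > 0" and R: "orthogonal_matrix R"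
  shows "0 < \<bar>det (matrix (\<lambda>v::real^2. c *\<^sub>R (R *v v)))\<bar>"
proof -
  have "inj (\<lambda>v::real^2. c *\<^sub>R (R *v v))" using inj_S[OF c R, of 0] by simp
  thus ?thesis using det_nz_iff_inj[OF lin_L] by simp
qed

lemma cov:
  fixes P Q :: "real^2 \<Rightarrow> real"
  assumes c: "c > 0" and R: "orthogonal_matrix R"
    and PQ: "\<And>x. P (c *\<^sub>R (R *v x) + b) = Q x"
    and Qi: "integrable lborel Q" and Qn: "\<And>x. 0 \<le> Q x"
  shows "integral UNIV P = \<bar>det (matrix (\<lambda>v::real^2. c *\<^sub>R (R *v v)))\<bar> * integral UNIV Q"
proof -
  define L where "L = (\<lambda>v::real^2. c *\<^sub>R (R *v v))"
  define S where "S = (\<lambda>v::real^2. c *\<^sub>R (R *v v) + b)"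
  define K where "K = \<bar>det (matrix L)\<bar>"
  have der: "(S has_derivative L) (at x within UNIV)" for x
    unfolding S_def L_def
    by (intro has_derivative_add_const linear_imp_has_derivative lin_L)
  have inj: "inj_on S UNIV" using inj_S[OF c R] by (simp add: S_def)
  have surj: "S ` UNIV = UNIV"
  proof -
    have "S ((1/c) *\<^sub>R (transpose R *v (u - b))) = u" for u
      using c by (simp add: S_def mv_scaleR orth_right[OF R] orth_right2[OF R] matrix_vector_mult_diff_distrib)
    thus ?thesis by (metis surjI surj_def)
  qed
  have Qa: "Q absolutely_integrable_on UNIV"
    by (rule nonnegative_absolutely_integrable_1[OF integrable_on_lborel[OF Qi]]) (simp add: Qn)
  have LHSa: "(\<lambda>x. K *\<^sub>R vec (Q x) :: real^1) absolutely_integrable_on UNIV"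
    unfolding absolutely_integrable_on_1_iff using absolutely_integrable_scaleR_left[OF Qa, of K] by simp
  have eqf: "(\<lambda>x. \<bar>det (matrix L)\<bar> *\<^sub>R vec (P (S x)) :: real^1) = (\<lambda>x. K *\<^sub>R vec (Q x))"
    by (simp add: K_def S_def PQ)
  note CV = has_absolute_integral_change_of_variables[of UNIV S "\<lambda>x. L" "\<lambda>u. vec (P u) :: real^1"
      "integral UNIV (\<lambda>x. K *\<^sub>R vec (Q x) :: real^1)", OF _ der inj]
  have "integral UNIV (\<lambda>u. vec (P u) :: real^1) = integral UNIV (\<lambda>x. K *\<^sub>R vec (Q x) :: real^1)"
    using CV LHSa unfolding eqf surj by simp
  hence "vec (integral UNIV P) = (vec (integral UNIV (\<lambda>x. K * Q x)) :: real^1)"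
    by (simp add: integral_on_1_eq[of UNIV "\<lambda>u. vec (P u) :: real^1"]
                  integral_on_1_eq[of UNIV "\<lambda>x. vec (Q x) :: real^1"] vec_eq_iff)
  hence "integral UNIV P = integral UNIV (\<lambda>x. K * Q x)" by (metis vec_component)
  also have "\<dots> = K * integral UNIV Q" using integral_cmul[of UNIV K Q] by simp
  finally show ?thesis by (simp add: K_def L_def)
qed


lemma dGA_eq: "ell_density A = qd y Y \<Longrightarrow> ell_density B = qd z Z \<Longrightarrow>
   d_GA A B = arccos (GI y Y z Z / sqrt (GI y Y y Y * GI z Z z Z))"
  by (simp add: d_GA_def GI_def power2_eq_square)

lemma normalize_psd:
  assumes aa: "aa > 0" and bb: "bb > 0" and cc: "cc > 0"
    and h: "\<And>r s t. 0 \<le> r*r*aa + s * s*bb + t*t*cc + 2*r * s*gab + 2*r*t*gac + 2 * s*t*gcb"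
  shows "0 \<le> r*r + s * s + t*t + 2*r * s*(gab/sqrt(aa*bb)) + 2*r*t*(gac/sqrt(aa*cc)) + 2 * s*t*(gcb/sqrt(cc*bb))"
proof -
  define A where "A = sqrt aa"
  define B where "B = sqrt bb"
  define C where "C = sqrt cc"
  have A: "A > 0" "aa = A*A" using aa by (simp_all add: A_def)
  have B: "B > 0" "bb = B*B" using bb by (simp_all add: B_def)
  have C: "C > 0" "cc = C*C" using cc by (simp_all add: C_def)
  have e: "sqrt(aa*bb) = A*B" "sqrt(aa*cc) = A*C" "sqrt(cc*bb) = C*B"
    by (simp_all add: A_def B_def C_def real_sqrt_mult)
  have "0 \<le> (r/A)*(r/A)*aa + (s/B)*(s/B)*bb + (t/C)*(t/C)*cc + 2*(r/A)*(s/B)*gab + 2*(r/A)*(t/C)*gac + 2*(s/B)*(t/C)*gcb"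
    by (rule h)
  also have "\<dots> = r*r + s * s + t*t + 2*r * s*(gab/(A*B)) + 2*r*t*(gac/(A*C)) + 2 * s*t*(gcb/(C*B))"
    using A B C by (simp add: field_simps)
  finally show ?thesis unfolding e .
qed

lemma sim_density:
  assumes c: "c > 0" and R: "orthogonal_matrix R"
  shows "qd (c *\<^sub>R (R *v y) + b) (Ytr c R Y) (c *\<^sub>R (R *v x) + b) = qd y Y x"
proof -
  have "(c *\<^sub>R (R *v x) + b) - (c *\<^sub>R (R *v y) + b) = c *\<^sub>R (R *v (x - y))"
    by (simp add: matrix_vector_mult_diff_distrib algebra_simps)
  thus ?thesis unfolding qd_def by (simp only: quad_T[OF c R])
qed

theorem mainTheorem8:
  assumes "is_ellipse Ai" and "is_ellipse Aj"
  shows "(d_GA Ai Aj = 0 \<longleftrightarrow> Ai = Aj)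
       \<and> d_GA Ai Aj = d_GA Aj Ai
       \<and> (\<forall>Ak. is_ellipse Ak \<longrightarrow> d_GA Ai Aj \<le> d_GA Ai Ak + d_GA Ak Aj)
       \<and> (\<forall>S. similarity2 S \<longrightarrow> d_GA (S ` Ai) (S ` Aj) = d_GA Ai Aj)"
proof -
  obtain ya Ya where a: "spd2 Ya" "Ai = ellipse_set ya Ya" "ell_density Ai = qd ya Ya"
    using is_ellipseE[OF assms(1)] by blast
  obtain yb Yb where b: "spd2 Yb" "Aj = ellipse_set yb Yb" "ell_density Aj = qd yb Yb"
    using is_ellipseE[OF assms(2)] by blast
  have tri: "d_GA A B \<le> d_GA A C + d_GA C B \<and> \<bar>GI y Y z Z / sqrt (GI y Y y Y * GI z Z z Z)\<bar> \<le> 1"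
    if A: "spd2 Y" "ell_density A = qd y Y" and B: "spd2 Z" "ell_density B = qd z Z"
      and C: "spd2 W" "ell_density C = qd w W" for A B C y Y z Z w W
  proof -
    have h: "0 \<le> r*r + s * s + t*t + 2*r * s*(GI y Y z Z/sqrt(GI y Y y Y*GI z Z z Z))
        + 2*r*t*(GI y Y w W/sqrt(GI y Y y Y*GI w W w W)) + 2 * s*t*(GI w W z Z/sqrt(GI w W w W*GI z Z z Z))" for r s t
      by (rule normalize_psd[OF GI_pos[OF A(1)] GI_pos[OF B(1)] GI_pos[OF C(1)]])
         (rule GI_psd[OF A(1) B(1) C(1)])
    show ?thesis using tri_aux[OF h] by (simp add: dGA_eq A(2) B(2) C(2))
  qed
  have P1: "d_GA Ai Aj = 0 \<longleftrightarrow> Ai = Aj"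
  proof
    assume d0: "d_GA Ai Aj = 0"
    define zz where "zz = GI ya Ya yb Yb / sqrt (GI ya Ya ya Ya * GI yb Yb yb Yb)"
    have z1: "\<bar>zz\<bar> \<le> 1" using tri[OF a(1,3) b(1,3) a(1,3)] by (simp add: zz_def)
    have "arccos zz = 0" using d0 by (simp add: dGA_eq a(3) b(3) zz_def)
    hence "zz = 1" using cos_arccos[of zz] z1 by (simp add: abs_le_iff)
    moreover have "sqrt (GI ya Ya ya Ya * GI yb Yb yb Yb) > 0"
      using GI_pos[OF a(1)] GI_pos[OF b(1)] by simp
    ultimately have "GI ya Ya yb Yb = sqrt (GI ya Ya ya Ya * GI yb Yb yb Yb)"
      by (simp add: zz_def field_simps)
    from eq_case[OF a(1) b(1) this] show "Ai = Aj" using a(2) b(2) by simp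
  next
    assume "Ai = Aj"
    have "GI ya Ya ya Ya > 0" by (rule GI_pos[OF a(1)])
    hence "d_GA Ai Ai = 0" by (simp add: dGA_eq[OF a(3) a(3)] real_sqrt_mult)
    thus "d_GA Ai Aj = 0" using \<open>Ai = Aj\<close> by simp
  qed
  have P2: "d_GA Ai Aj = d_GA Aj Ai"
    by (simp add: dGA_eq[OF a(3) b(3)] dGA_eq[OF b(3) a(3)] GI_sym mult.commute)
  have P3: "\<forall>Ak. is_ellipse Ak \<longrightarrow> d_GA Ai Aj \<le> d_GA Ai Ak + d_GA Ak Aj"
  proof (intro allI impI)
    fix Ak assume "is_ellipse Ak"
    then obtain yc Yc where c: "spd2 Yc" "Ak = ellipse_set yc Yc" "ell_density Ak = qd yc Yc"
      using is_ellipseE by blast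
    show "d_GA Ai Aj \<le> d_GA Ai Ak + d_GA Ak Aj" using tri[OF a(1,3) b(1,3) c(1,3)] by simp
  qed
  have P4: "\<forall>S. similarity2 S \<longrightarrow> d_GA (S ` Ai) (S ` Aj) = d_GA Ai Aj"
  proof (intro allI impI)
    fix S assume "similarity2 S"
    then obtain c R bv where c: "c > 0" and R: "orthogonal_matrix R"
      and S: "S = (\<lambda>x. c *\<^sub>R (R *v x) + bv)" unfolding similarity2_def by blast
    define K where "K = \<bar>det (matrix (\<lambda>v::real^2. c *\<^sub>R (R *v v)))\<bar>"
    have K: "K > 0" unfolding K_def by (rule K_pos[OF c R])
    have img: "S ` ellipse_set y Y = ellipse_set (S y) (Ytr c R Y)" for y Y
      unfolding S by (rule image_ellipse[OF c R])
    have dS: "ell_density (S ` ellipse_set y Y) = qd (S y) (Ytr c R Y)" if "spd2 Y" for y Y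
      unfolding img by (rule ell_density_ellipse[OF spd_Ytr[OF c R that]])
    have GS: "GI (S y) (Ytr c R Y) (S z) (Ytr c R Z) = K * GI y Y z Z" if "spd2 Y" "spd2 Z" for y Y z Z
    proof -
      have pq: "qd (S y) (Ytr c R Y) (c *\<^sub>R (R *v x) + bv) * qd (S z) (Ytr c R Z) (c *\<^sub>R (R *v x) + bv)
          = qd y Y x * qd z Z x" for x
        unfolding S by (simp only: sim_density[OF c R])
      show ?thesis unfolding GI_def K_def
        by (rule cov[OF c R pq qd_prod_int[OF that]]) (simp add: qd_pos less_imp_le)
    qed
    have "d_GA (S ` Ai) (S ` Aj) = arccos (K * GI ya Ya yb Yb / sqrt (K * GI ya Ya ya Ya * (K * GI yb Yb yb Yb)))"
      by (simp add: a(2) b(2) dGA_eq[OF dS[OF a(1)] dS[OF b(1)]] GS a(1) b(1))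
    also have "sqrt (K * GI ya Ya ya Ya * (K * GI yb Yb yb Yb)) = K * sqrt (GI ya Ya ya Ya * GI yb Yb yb Yb)"
      using K by (simp add: real_sqrt_mult mult_ac)
    also have "K * GI ya Ya yb Yb / (K * sqrt (GI ya Ya ya Ya * GI yb Yb yb Yb))
        = GI ya Ya yb Yb / sqrt (GI ya Ya ya Ya * GI yb Yb yb Yb)" using K by simp
    finally show "d_GA (S ` Ai) (S ` Aj) = d_GA Ai Aj" by (simp add: dGA_eq[OF a(3) b(3)])
  qed
  show ?thesis using P1 P2 P3 P4 by blast
qed

end
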